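(* Let $0\le s\le t$. The linear functional $X_s:W^{1,2}([0,t])\to\mathbb R$, $X_sh=\int_0^s h(u)\,\mathrm{d}Z_u$, is continuous (for every realization of $Z$), and $$\|X_s\|\le |Z_s|(1+s)+|Z_0|+\Big(\int_0^s Z_{u-}^2\,\mathrm{d}u\Big)^{1/2}<\infty.$$
   Context: $(Z_s)_{0\le s\le t}$ is a real-valued càdlàg semimartingale, $t>0$. For $h\in W^{1,2}([0,t])$ (weakly differentiable functions on $[0,t]$ with $h'\in L_2([0,t])$) the stochastic integral is defined pathwise by $\int_0^s h(u)\,\mathrm{d}Z_u:=h(s)Z_s-h(0)Z_0-\int_0^s Z_{u-}h'(u)\,\mathrm{d}u$. $W^{1,2}([0,t])$ carries the norm $\|h\|^2=|h(0)|^2+\int_0^t h'(u)^2\,\mathrm{d}u$ (a reproducing kernel Hilbert space norm with kernel $R(s,r)=1+\min(s,r)$), and $\|X_s\|$ denotes the corresponding dual norm. *)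

theory Defs
  imports "HOL-Analysis.Analysis"
begin

definition cadlag_on :: "real \<Rightarrow> (real \<Rightarrow> real) \<Rightarrow> bool" where
  "cadlag_on t Z \<longleftrightarrow>
     (\<forall>u\<in>{0..<t}. continuous (at_right u) Z) \<and>
     (\<forall>u\<in>{0<..t}. \<exists>l. (Z \<longlongrightarrow> l) (at_left u))"

definition left_lim :: "(real \<Rightarrow> real) \<Rightarrow> real \<Rightarrow> real" where
  "left_lim Z u = Lim (at_left u) Z"

definition is_wderiv :: "real \<Rightarrow> (real \<Rightarrow> real) \<Rightarrow> (real \<Rightarrow> real) \<Rightarrow> bool" where
  "is_wderiv t h g \<longleftrightarrow>
     g \<in> borel_measurable lborel \<and>
     set_integrable lborel {0..t} (\<lambda>u. (g u)\<^sup>2) \<and>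
     (\<forall>x\<in>{0..t}. h x = h 0 + (LINT u:{0..x}|lborel. g u))"

definition W12 :: "real \<Rightarrow> (real \<Rightarrow> real) set" where
  "W12 t = {h. \<exists>g. is_wderiv t h g}"

definition wderiv :: "real \<Rightarrow> (real \<Rightarrow> real) \<Rightarrow> real \<Rightarrow> real" where
  "wderiv t h = (SOME g. is_wderiv t h g)"

definition w12_norm :: "real \<Rightarrow> (real \<Rightarrow> real) \<Rightarrow> real" where
  "w12_norm t h = sqrt ((h 0)\<^sup>2 + (LINT u:{0..t}|lborel. (wderiv t h u)\<^sup>2))"

text \<open>Pathwise stochastic integral X_s h = int_0^s h(u) dZ_u.\<close>
definition Xint :: "real \<Rightarrow> (real \<Rightarrow> real) \<Rightarrow> real \<Rightarrow> (real \<Rightarrow> real) \<Rightarrow> real" where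
  "Xint t Z s h = h s * Z s - h 0 * Z 0 - (LINT u:{0..s}|lborel. left_lim Z u * wderiv t h u)"

definition dual_norm :: "real \<Rightarrow> ((real \<Rightarrow> real) \<Rightarrow> real) \<Rightarrow> real" where
  "dual_norm t L = Sup {\<bar>L h\<bar> | h. h \<in> W12 t \<and> w12_norm t h \<le> 1}"

end

theory Submission
  imports Defs
begin


lemma cadlag_local_bound:
  assumes c: "cadlag_on t Z" and u: "u \<in> {0..t}"
  shows "\<exists>d>0. \<exists>M. \<forall>v\<in>{0..t}. dist v u < d \<longrightarrow> \<bar>Z v\<bar> \<le> M"
proof -
  have "\<exists>d1>0. \<forall>v. u < v \<and> v < u + d1 \<and> v \<le> t \<longrightarrow> \<bar>Z v\<bar> \<le> \<bar>Z u\<bar> + 1"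
  proof (cases "u < t")
    case True
    then have "continuous (at_right u) Z" using c u unfolding cadlag_on_def by auto
    then have "(Z \<longlongrightarrow> Z u) (at_right u)"
      by (simp add: continuous_within)
    then have "\<forall>\<^sub>F v in at_right u. dist (Z v) (Z u) < 1"
      by (rule tendstoD) simp
    then obtain b where b: "b > u" "\<And>v. u < v \<Longrightarrow> v < b \<Longrightarrow> dist (Z v) (Z u) < 1"
      unfolding eventually_at_right_field by blast
    show ?thesis
      apply (rule exI[of _ "b - u"]) using b by (force simp: dist_real_def)
  next
    case False
    then show ?thesis by (intro exI[of _ 1]) auto
  qed
  then obtain d1 where d1: "d1 > 0" "\<And>v. u < v \<Longrightarrow> v < u + d1 \<Longrightarrow> v \<le> t \<Longrightarrow> \<bar>Z v\<bar> \<le> \<bar>Z u\<bar> + 1"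
    by blast
  have "\<exists>d2>0. \<exists>l. \<forall>v. u - d2 < v \<and> v < u \<and> 0 \<le> v \<longrightarrow> \<bar>Z v\<bar> \<le> \<bar>l\<bar> + 1"
  proof (cases "0 < u")
    case True
    then obtain l where l: "(Z \<longlongrightarrow> l) (at_left u)" using c u True unfolding cadlag_on_def by force
    then have "\<forall>\<^sub>F v in at_left u. dist (Z v) l < 1"
      by (rule tendstoD) simp
    then obtain b where b: "b < u" "\<And>v. b < v \<Longrightarrow> v < u \<Longrightarrow> dist (Z v) l < 1"
      unfolding eventually_at_left_field by blast
    show ?thesis
      apply (rule exI[of _ "u - b"]) using b by (force simp: dist_real_def intro!: exI[of _ l])
  next
    case False
    then show ?thesis using u by (intro exI[of _ 1]) auto
  qed
  then obtain d2 l where d2: "d2 > 0" "\<And>v. u - d2 < v \<Longrightarrow> v < u \<Longrightarrow> 0 \<le> v \<Longrightarrow> \<bar>Z v\<bar> \<le> \<bar>l\<bar> + 1"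
    by blast
  have "\<bar>Z v\<bar> \<le> \<bar>Z u\<bar> + \<bar>l\<bar> + 1" if v: "v \<in> {0..t}" "dist v u < min d1 d2" for v
  proof -
    consider "v = u" | "u < v" | "v < u" by linarith
    then show ?thesis
    proof cases
      case 1 then show ?thesis by simp
    next
      case 2 then show ?thesis using d1(2)[of v] v by (auto simp: dist_real_def)
    next
      case 3 then show ?thesis using d2(2)[of v] v by (auto simp: dist_real_def)
    qed
  qed
  moreover have "0 < min d1 d2" using d1 d2 by simp
  ultimately show ?thesis by blast
qed

lemma cadlag_bounded:
  assumes c: "cadlag_on t Z"
  shows "\<exists>B. \<forall>v\<in>{0..t}. \<bar>Z v\<bar> \<le> B"
proof -
  have "\<forall>u\<in>{0..t}. \<exists>d. d > 0 \<and> (\<exists>M. \<forall>v\<in>{0..t}. dist v u < d \<longrightarrow> \<bar>Z v\<bar> \<le> M)"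
    using cadlag_local_bound[OF c] by blast
  then obtain d where d: "\<And>u. u \<in> {0..t} \<Longrightarrow> d u > 0 \<and> (\<exists>M. \<forall>v\<in>{0..t}. dist v u < d u \<longrightarrow> \<bar>Z v\<bar> \<le> M)"
    by metis
  then obtain M where M: "\<And>u v. u \<in> {0..t} \<Longrightarrow> v \<in> {0..t} \<Longrightarrow> dist v u < d u \<Longrightarrow> \<bar>Z v\<bar> \<le> M u"
    by metis
  have "compact {0..t::real}" by simp
  then obtain T where T: "T \<subseteq> {0..t}" "finite T" "{0..t} \<subseteq> (\<Union>u\<in>T. ball u (d u))"
  proof (rule compactE_image)
    show "\<And>u. u \<in> {0..t} \<Longrightarrow> open (ball u (d u))" by simp
    show "{0..t} \<subseteq> (\<Union>u\<in>{0..t}. ball u (d u))" using d by force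
  qed blast
  show ?thesis
  proof (intro exI[of _ "Max (insert 0 (M ` T))"] ballI)
    fix v assume v: "v \<in> {0..t}"
    then obtain u where u: "u \<in> T" "v \<in> ball u (d u)" using T by blast
    then have "\<bar>Z v\<bar> \<le> M u" using M[of u v] T v by (auto simp: dist_commute)
    also have "M u \<le> Max (insert 0 (M ` T))" using u T by (intro Max_ge) auto
    finally show "\<bar>Z v\<bar> \<le> Max (insert 0 (M ` T))" .
  qed
qed



lemma left_lim_tendsto:
  assumes c: "cadlag_on t Z" and u: "u \<in> {0<..t}"
  shows "(Z \<longlongrightarrow> left_lim Z u) (at_left u)"
proof -
  obtain l where "(Z \<longlongrightarrow> l) (at_left u)" using c u unfolding cadlag_on_def by blast
  moreover have "Lim (at_left u) Z = l"
    using calculation by (intro tendsto_Lim) (auto simp: trivial_limit_at_left_real)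
  ultimately show ?thesis unfolding left_lim_def by simp
qed

lemma left_lim_bound:
  assumes c: "cadlag_on t Z" and u: "u \<in> {0<..t}" and B: "\<forall>v\<in>{0..t}. \<bar>Z v\<bar> \<le> B"
  shows "\<bar>left_lim Z u\<bar> \<le> B"
proof -
  have "((\<lambda>v. \<bar>Z v\<bar>) \<longlongrightarrow> \<bar>left_lim Z u\<bar>) (at_left u)"
    by (intro tendsto_rabs left_lim_tendsto[OF c u])
  moreover have "\<forall>\<^sub>F v in at_left u. \<bar>Z v\<bar> \<le> B"
    unfolding eventually_at_left_field using u B by (intro exI[of _ 0]) auto
  ultimately show ?thesis
    by (rule tendsto_upperbound) (simp add: trivial_limit_at_left_real)
qed

lemma left_lim_meas:
  assumes c: "cadlag_on t Z"
  shows "(\<lambda>u. indicator {0<..t} u * left_lim Z u) \<in> borel_measurable borel"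
proof (rule borel_measurable_LIMSEQ_real)
  define p where "p n x = (real_of_int \<lceil>x * 2^n\<rceil> - 1) / 2^n" for n :: nat and x :: real
  show "(\<lambda>n. indicator {0<..t} x * Z (p n x)) \<longlonglongrightarrow> indicator {0<..t} x * left_lim Z x" for x
  proof (cases "x \<in> {0<..t}")
    case True
    have lo: "x - 1 / 2^n \<le> p n x" for n
    proof -
      have "x * 2^n \<le> real_of_int \<lceil>x * 2^n\<rceil>" by linarith
      then have "x * 2^n - 1 \<le> real_of_int \<lceil>x * 2^n\<rceil> - 1" by linarith
      then show ?thesis unfolding p_def by (simp add: field_simps)
    qed
    have hi: "p n x < x" for n
    proof -
      have "real_of_int \<lceil>x * 2^n\<rceil> - 1 < x * 2^n" by linarith
      then show ?thesis unfolding p_def by (simp add: field_simps)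
    qed
    have z: "(\<lambda>n. 1 / (2::real)^n) \<longlonglongrightarrow> 0"
      by (rule LIMSEQ_divide_realpow_zero) simp
    have l1: "(\<lambda>n. x - 1 / 2^n) \<longlonglongrightarrow> x"
      using tendsto_diff[OF tendsto_const[of x] z] by simp
    have e1: "\<forall>\<^sub>F n in sequentially. x - 1 / 2^n \<le> p n x" using lo by simp
    have e2: "\<forall>\<^sub>F n in sequentially. p n x \<le> x" using hi by (simp add: less_imp_le)
    have "(\<lambda>n. p n x) \<longlonglongrightarrow> x"
      by (rule real_tendsto_sandwich[OF e1 e2 l1 tendsto_const])
    then have "filterlim (\<lambda>n. p n x) (at_left x) sequentially"
      unfolding filterlim_at using hi by (auto simp: less_imp_neq)
    then have "(\<lambda>n. Z (p n x)) \<longlonglongrightarrow> left_lim Z x"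
      using left_lim_tendsto[OF c True] by (rule filterlim_compose[rotated])
    then show ?thesis using True by simp
  qed simp
  show "(\<lambda>x. indicator {0<..t} x * Z (p n x)) \<in> borel_measurable borel" for n
  proof -
    have cm: "(\<lambda>x::real. \<lceil>x * (2::real) ^ n\<rceil>) \<in> borel \<rightarrow>\<^sub>M count_space UNIV"
    proof -
      have "(\<lambda>x::real. x * 2 ^ n) \<in> borel \<rightarrow>\<^sub>M borel" by simp
      then show ?thesis
        using measurable_compose[OF _ measurable_real_ceiling] by blast
    qed
    have "(\<lambda>x. Z ((real_of_int ((\<lambda>x::real. \<lceil>x * (2::real)^n\<rceil>) x) - 1) / 2^n)) \<in> borel_measurable borel"
      by (rule measurable_compose_countable[where f="\<lambda>i x. Z ((real_of_int i - 1) / 2^n)", OF _ cm]) simp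
    then show ?thesis unfolding p_def
      by (intro borel_measurable_times) auto
  qed
qed



lemma cs_aux:
  fixes I A B :: real
  assumes A: "A \<ge> 0" and B: "B \<ge> 0" and I: "I \<ge> 0"
    and h: "\<And>c. c > 0 \<Longrightarrow> I \<le> (c * A + B / c) / 2"
  shows "I \<le> sqrt A * sqrt B"
proof (cases "A > 0 \<and> B > 0")
  case True
  define c where "c = sqrt B / sqrt A"
  have c: "c > 0" using True unfolding c_def by simp
  have "c * A = sqrt A * sqrt B" unfolding c_def using True
    by (simp add: field_simps)
  moreover have "B / c = sqrt A * sqrt B" unfolding c_def using True
    by (simp add: field_simps)
  ultimately show ?thesis using h[OF c] by simp
next
  case False
  then have AB: "A = 0 \<or> B = 0" using A B by linarith
  show ?thesis
  proof (rule ccontr)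
    assume "\<not> ?thesis"
    then have Ip: "I > 0" using AB by auto
    show False
    proof (cases "A = 0")
      case True
      define c where "c = (B + 1) / I"
      have c: "c > 0" using Ip B unfolding c_def by simp
      have "B / c = B * I / (B + 1)" unfolding c_def using Ip B by (simp add: field_simps)
      also have "\<dots> < 2 * I" using Ip B by (simp add: field_simps) (smt (verit) mult_nonneg_nonneg)
      finally show False using h[OF c] True by simp
    next
      case False
      then have B0: "B = 0" using AB by simp
      define c where "c = I / (A + 1)"
      have c: "c > 0" using Ip A unfolding c_def by simp
      have "c * A = I * A / (A + 1)" unfolding c_def by simp
      also have "\<dots> < 2 * I" using Ip A by (simp add: field_simps) (smt (verit) mult_nonneg_nonneg)
      finally show False using h[OF c] B0 by simp
    qed
  qed
qed

lemma cs_lborel: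
  fixes f g :: "real \<Rightarrow> real"
  assumes [measurable]: "f \<in> borel_measurable lborel" "g \<in> borel_measurable lborel"
    and fi: "integrable lborel (\<lambda>x. (f x)\<^sup>2)" and gi: "integrable lborel (\<lambda>x. (g x)\<^sup>2)"
  shows "integrable lborel (\<lambda>x. f x * g x)"
    and "\<bar>LINT x|lborel. f x * g x\<bar> \<le> sqrt (LINT x|lborel. (f x)\<^sup>2) * sqrt (LINT x|lborel. (g x)\<^sup>2)"
proof -
  have pw: "\<bar>f x * g x\<bar> \<le> (c * (f x)\<^sup>2 + (g x)\<^sup>2 / c) / 2" if c: "c > 0" for c x
  proof -
    have "0 \<le> (c * \<bar>f x\<bar> - \<bar>g x\<bar>)\<^sup>2" by simp
    then have "2 * c * \<bar>f x * g x\<bar> \<le> c\<^sup>2 * (f x)\<^sup>2 + (g x)\<^sup>2"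
      by (simp add: power2_eq_square algebra_simps abs_mult)
    then show ?thesis using c by (simp add: field_simps power2_eq_square)
  qed
  have ib: "integrable lborel (\<lambda>x. (c * (f x)\<^sup>2 + (g x)\<^sup>2 / c) / 2)" for c
    using fi gi by simp
  show int: "integrable lborel (\<lambda>x. f x * g x)"
    by (rule Bochner_Integration.integrable_bound[OF ib[of 1]]) (use pw[of 1] in auto)
  have "\<bar>LINT x|lborel. f x * g x\<bar> \<le> LINT x|lborel. \<bar>f x * g x\<bar>"
    by (rule integral_abs_bound)
  also have "\<dots> \<le> sqrt (LINT x|lborel. (f x)\<^sup>2) * sqrt (LINT x|lborel. (g x)\<^sup>2)"
  proof (rule cs_aux)
    show "0 \<le> (LINT x|lborel. (f x)\<^sup>2)" "0 \<le> (LINT x|lborel. (g x)\<^sup>2)" "0 \<le> (LINT x|lborel. \<bar>f x * g x\<bar>)"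
      by auto
    fix c :: real assume c: "c > 0"
    have "(LINT x|lborel. \<bar>f x * g x\<bar>) \<le> (LINT x|lborel. (c * (f x)\<^sup>2 + (g x)\<^sup>2 / c) / 2)"
      by (rule integral_mono[OF _ ib]) (use int pw[OF c] in auto)
    also have "\<dots> = (c * (LINT x|lborel. (f x)\<^sup>2) + (LINT x|lborel. (g x)\<^sup>2) / c) / 2"
      using fi gi by simp
    finally show "(LINT x|lborel. \<bar>f x * g x\<bar>) \<le> (c * (LINT x|lborel. (f x)\<^sup>2) + (LINT x|lborel. (g x)\<^sup>2) / c) / 2" .
  qed
  finally show "\<bar>LINT x|lborel. f x * g x\<bar> \<le> sqrt (LINT x|lborel. (f x)\<^sup>2) * sqrt (LINT x|lborel. (g x)\<^sup>2)" .
qed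



lemma sets_borel_atMost: "sets (borel :: real measure) = sigma_sets UNIV (range (\<lambda>a. {..a}))"
  by (subst borel_eq_atMost) (simp add: sets_measure_of)

lemma zero_ae:
  fixes f :: "real \<Rightarrow> real"
  assumes fi: "integrable lborel (\<lambda>u. indicator {0..t} u * f u)"
    and z: "\<And>x. x \<in> {0..t} \<Longrightarrow> (LINT u|lborel. indicator {0..x} u * f u) = 0"
  shows "AE u in lborel. indicator {0..t} u * f u = 0"
proof -
  define F where "F u = indicator {0..t} u * f u" for u
  have Fi: "integrable lborel F" using fi unfolding F_def .
  then have [measurable]: "F \<in> borel_measurable borel" by (simp add: borel_measurable_integrable)
  have bas: "(LINT u|lborel. indicator {..a} u * F u) = 0" for a
  proof -
    have eq: "indicator {..a} u * F u = indicator {0..min a t} u * f u" for u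
      unfolding F_def by (auto simp: indicator_def)
    show ?thesis
    proof (cases "0 \<le> min a t")
      case True then show ?thesis unfolding eq using z[of "min a t"] by simp
    next
      case False then have "{0..min a t} = {}" by auto
      then show ?thesis unfolding eq by simp
    qed
  qed
  have all: "(LINT u|lborel. indicator A u * F u) = 0" if A: "A \<in> sets borel" for A
  proof -
    have "Int_stable (range (\<lambda>a::real. {..a}))"
      unfolding Int_stable_def by (auto simp: Int_atMost)
    moreover have "range (\<lambda>a::real. {..a}) \<subseteq> Pow UNIV" by simp
    moreover have "A \<in> sigma_sets UNIV (range (\<lambda>a::real. {..a}))" using A sets_borel_atMost by simp
    ultimately show ?thesis
    proof (induction rule: sigma_sets_induct_disjoint)
      case (basic A) then show ?case using bas by auto
    next
      case empty then show ?case by simp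
    next
      case (compl A)
      then have [measurable]: "A \<in> sets borel" using sets_borel_atMost by simp
      have "(LINT u|lborel. indicator (UNIV - A) u * F u) = (LINT u|lborel. F u - indicator A u * F u)"
        by (intro Bochner_Integration.integral_cong) (auto simp: indicator_def)
      also have "\<dots> = (LINT u|lborel. F u) - (LINT u|lborel. indicator A u * F u)"
        using integrable_mult_indicator[OF _ Fi, of A]
        by (intro Bochner_Integration.integral_diff Fi) auto
      also have "(LINT u|lborel. F u) = (LINT u|lborel. indicator {..t} u * F u)"
        by (intro Bochner_Integration.integral_cong) (auto simp: indicator_def F_def)
      finally show ?case using compl.IH bas by simp
    next
      case (union A)
      then have [measurable]: "\<And>i. A i \<in> sets borel" using sets_borel_atMost by auto
      have "(LINT u:(\<Union>i. A i)|lborel. F u) = (\<Sum>i. (LINT u:(A i)|lborel. F u))"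
      proof (rule lebesgue_integral_countable_add)
        show "\<And>i. A i \<in> sets lborel" by simp
        show "\<And>i j. i \<noteq> j \<Longrightarrow> A i \<inter> A j = {}" using union(1) by (auto simp: disjoint_family_on_def)
        show "set_integrable lborel (\<Union>i. A i) F"
          unfolding set_integrable_def by (intro integrable_mult_indicator Fi) measurable
      qed
      then show ?case using union(3) by (simp add: set_lebesgue_integral_def)
    qed
  qed
  have "AE u in lborel. F u = (\<lambda>_. 0) u"
  proof (rule density_unique_real)
    show "integrable lborel F" by (rule Fi)
    show "integrable lborel (\<lambda>_. 0::real)" by simp
    fix A :: "real set" assume "A \<in> sets lborel"
    then show "(LINT x:A|lborel. F x) = (LINT x:A|lborel. (\<lambda>_. 0::real) x)"
      using all[of A] by (simp add: set_lebesgue_integral_def)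
  qed
  then show ?thesis unfolding F_def by simp
qed



lemma wd_L1:
  assumes "is_wderiv t h g" and "x \<le> t"
  shows "integrable lborel (\<lambda>u. indicator {0..x} u * g u)"
proof -
  have [measurable]: "g \<in> borel_measurable borel" and sq: "integrable lborel (\<lambda>u. indicator {0..t} u * (g u)\<^sup>2)"
    using assms unfolding is_wderiv_def set_integrable_def by auto
  have i1: "integrable lborel (\<lambda>u. indicator {0..t} u * (1::real))"
    using integrable_indicator_iff[of lborel "{0..t}"] by (simp add: emeasure_lborel_Icc_eq)
  have "integrable lborel (\<lambda>u. indicator {0..t} u * g u)"
  proof (rule Bochner_Integration.integrable_bound[OF Bochner_Integration.integrable_add[OF i1 sq]])
    show "(\<lambda>u. indicator {0..t} u * g u) \<in> borel_measurable lborel" by simp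
    show "AE u in lborel. norm (indicator {0..t} u * g u) \<le> norm (indicator {0..t} u * 1 + indicator {0..t} u * (g u)\<^sup>2)"
    proof (rule AE_I2)
      fix u
      have "\<bar>g u\<bar> \<le> 1 + (g u)\<^sup>2"
      proof (cases "\<bar>g u\<bar> \<le> 1")
        case False
        then have "\<bar>g u\<bar> * 1 \<le> \<bar>g u\<bar> * \<bar>g u\<bar>" by (intro mult_left_mono) auto
        then show ?thesis by (simp add: power2_eq_square abs_mult_self_eq)
      qed (simp add: add_increasing2)
      then show "norm (indicator {0..t} u * g u) \<le> norm (indicator {0..t} u * 1 + indicator {0..t} u * (g u)\<^sup>2)"
        by (auto simp: indicator_def)
    qed
  qed
  from integrable_mult_indicator[OF _ this, of "{0..x}"]
  have "integrable lborel (\<lambda>u. indicator {0..x} u * (indicator {0..t} u * g u))" by simp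
  moreover have "indicator {0..x} u * (indicator {0..t} u * g u) = indicator {0..x} u * g u" for u :: real
    using assms(2) by (auto simp: indicator_def)
  ultimately show ?thesis by simp
qed



lemma wd_eq:
  assumes "is_wderiv t h g" and "x \<in> {0..t}"
  shows "h x = h 0 + (LINT u|lborel. indicator {0..x} u * g u)"
proof -
  have "h x = h 0 + (LINT u:{0..x}|lborel. g u)" using assms unfolding is_wderiv_def by blast
  then show ?thesis unfolding set_lebesgue_integral_def by simp
qed

lemma wd_unique:
  assumes g1: "is_wderiv t h g1" and g2: "is_wderiv t h g2"
  shows "AE u in lborel. indicator {0..t} u * (g1 u - g2 u) = 0"
proof (rule zero_ae)
  show "integrable lborel (\<lambda>u. indicator {0..t} u * (g1 u - g2 u))"
    using Bochner_Integration.integrable_diff[OF wd_L1[OF g1 order_refl] wd_L1[OF g2 order_refl]]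
    by (simp add: algebra_simps)
  fix x assume x: "x \<in> {0..t}"
  have "(LINT u|lborel. indicator {0..x} u * (g1 u - g2 u))
      = (LINT u|lborel. indicator {0..x} u * g1 u) - (LINT u|lborel. indicator {0..x} u * g2 u)"
    using Bochner_Integration.integral_diff[OF wd_L1[OF g1] wd_L1[OF g2], of x] x
    by (simp add: algebra_simps)
  also have "\<dots> = 0" using wd_eq[OF g1 x] wd_eq[OF g2 x] by simp
  finally show "(LINT u|lborel. indicator {0..x} u * (g1 u - g2 u)) = 0" .
qed

lemma wd_zero: "is_wderiv t (\<lambda>_. 0) (\<lambda>_. 0)"
  unfolding is_wderiv_def set_integrable_def by simp

lemma wderiv_is:
  assumes "h \<in> W12 t" shows "is_wderiv t h (wderiv t h)"
proof -
  obtain g where "is_wderiv t h g" using assms unfolding W12_def by blast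
  then show ?thesis unfolding wderiv_def by (rule someI[where P="is_wderiv t h"])
qed



lemma wd_diff:
  assumes gk: "is_wderiv t k gk" and gh: "is_wderiv t h gh"
  shows "is_wderiv t (\<lambda>u. k u - h u) (\<lambda>u. gk u - gh u)"
proof -
  have [measurable]: "gk \<in> borel_measurable borel" "gh \<in> borel_measurable borel"
    and sk: "integrable lborel (\<lambda>u. indicator {0..t} u * (gk u)\<^sup>2)"
    and sh: "integrable lborel (\<lambda>u. indicator {0..t} u * (gh u)\<^sup>2)"
    using gk gh unfolding is_wderiv_def set_integrable_def by auto
  have "integrable lborel (\<lambda>u. indicator {0..t} u * (gk u - gh u)\<^sup>2)"
  proof (rule Bochner_Integration.integrable_bound[OF Bochner_Integration.integrable_add[OF sk sh, THEN integrable_mult_right[where c=2]]])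
    show "(\<lambda>u. indicator {0..t} u * (gk u - gh u)\<^sup>2) \<in> borel_measurable lborel" by simp
    show "AE u in lborel. norm (indicator {0..t} u * (gk u - gh u)\<^sup>2) \<le> norm (2 * (indicator {0..t} u * (gk u)\<^sup>2 + indicator {0..t} u * (gh u)\<^sup>2))"
    proof (rule AE_I2)
      fix u
      have "(gk u - gh u)\<^sup>2 \<le> 2 * ((gk u)\<^sup>2 + (gh u)\<^sup>2)"
      proof -
        have "0 \<le> (gk u + gh u)\<^sup>2" by simp
        then show ?thesis by (simp add: power2_eq_square algebra_simps)
      qed
      then show "norm (indicator {0..t} u * (gk u - gh u)\<^sup>2) \<le> norm (2 * (indicator {0..t} u * (gk u)\<^sup>2 + indicator {0..t} u * (gh u)\<^sup>2))"
        by (auto simp: indicator_def)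
    qed
  qed
  moreover have "k x - h x = (k 0 - h 0) + (LINT u:{0..x}|lborel. gk u - gh u)" if x: "x \<in> {0..t}" for x
  proof -
    have "(LINT u:{0..x}|lborel. gk u - gh u) = (LINT u|lborel. indicator {0..x} u * gk u) - (LINT u|lborel. indicator {0..x} u * gh u)"
      using Bochner_Integration.integral_diff[OF wd_L1[OF gk] wd_L1[OF gh], of x] x
      by (simp add: algebra_simps set_lebesgue_integral_def)
    then show ?thesis using wd_eq[OF gk x] wd_eq[OF gh x] by simp
  qed
  moreover have "(\<lambda>u. gk u - gh u) \<in> borel_measurable lborel" by simp
  ultimately show ?thesis unfolding is_wderiv_def set_integrable_def
    by (simp only: real_scaleR_def) blast
qed



lemma L_meas_int:
  assumes c: "cadlag_on t Z" and s: "0 \<le> s" "s \<le> t"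
  shows "(\<lambda>u. indicator {0..s} u * left_lim Z u) \<in> borel_measurable borel"
    and "integrable lborel (\<lambda>u. (indicator {0..s} u * left_lim Z u)\<^sup>2)"
proof -
  have eq: "indicator {0..s} u * left_lim Z u
      = indicator {0..s} u * (indicator {0<..t} u * left_lim Z u) + indicator {0} u * left_lim Z 0" for u
    using s by (auto simp: indicator_def)
  have m0: "(\<lambda>u. indicator {0<..t} u * left_lim Z u) \<in> borel_measurable borel"
    by (rule left_lim_meas[OF c])
  show m: "(\<lambda>u. indicator {0..s} u * left_lim Z u) \<in> borel_measurable borel"
    unfolding eq using m0 by simp
  obtain B where B: "\<forall>v\<in>{0..t}. \<bar>Z v\<bar> \<le> B" using cadlag_bounded[OF c] by blast
  define B' where "B' = max B \<bar>left_lim Z 0\<bar>"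
  have bd: "\<bar>indicator {0..s} u * left_lim Z u\<bar> \<le> B'" for u
  proof (cases "u \<in> {0<..s}")
    case True
    then have "\<bar>left_lim Z u\<bar> \<le> B" using left_lim_bound[OF c _ B, of u] s by auto
    then show ?thesis using True unfolding B'_def by (auto simp: indicator_def)
  next
    case False
    then show ?thesis unfolding B'_def
      by (cases "u = 0") (auto simp: indicator_def)
  qed
  show "integrable lborel (\<lambda>u. (indicator {0..s} u * left_lim Z u)\<^sup>2)"
  proof (rule integrableI_bounded_set[where A="{0..s}" and B="B'\<^sup>2"])
    show "{0..s} \<in> sets lborel" by simp
    show "(\<lambda>u. (indicator {0..s} u * left_lim Z u)\<^sup>2) \<in> borel_measurable lborel" using m by simp
    show "emeasure lborel {0..s} < \<infinity>" using s by (simp add: emeasure_lborel_Icc_eq)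
    show "AE x in lborel. x \<in> {0..s} \<longrightarrow> norm ((indicator {0..s} x * left_lim Z x)\<^sup>2) \<le> B'\<^sup>2"
    proof (rule AE_I2, intro impI)
      fix x
      have "\<bar>indicator {0..s} x * left_lim Z x\<bar> \<le> \<bar>B'\<bar>" using bd[of x] by linarith
      then show "norm ((indicator {0..s} x * left_lim Z x)\<^sup>2) \<le> B'\<^sup>2"
        by (simp add: abs_le_square_iff)
    qed
    show "AE x in lborel. x \<notin> {0..s} \<longrightarrow> (indicator {0..s} x * left_lim Z x)\<^sup>2 = 0"
      by auto
  qed
qed



lemma core:
  assumes c: "cadlag_on t Z" and s: "0 \<le> s" "s \<le> t" and g: "is_wderiv t \<phi> g"
  shows "\<bar>\<phi> s * Z s - \<phi> 0 * Z 0 - (LINT u:{0..s}|lborel. left_lim Z u * g u)\<bar>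
    \<le> (\<bar>Z s\<bar> * (1 + s) + \<bar>Z 0\<bar> + sqrt (LINT u:{0..s}|lborel. (left_lim Z u)\<^sup>2))
       * sqrt ((\<phi> 0)\<^sup>2 + (LINT u:{0..t}|lborel. (g u)\<^sup>2))"
proof -
  define f1 where "f1 u = indicator {0..s} u * left_lim Z u" for u
  define g1 where "g1 u = indicator {0..s} u * g u" for u
  define i1 where "i1 u = (indicator {0..s} u :: real)" for u
  have [measurable]: "g \<in> borel_measurable borel" and gt: "integrable lborel (\<lambda>u. indicator {0..t} u * (g u)\<^sup>2)"
    using g unfolding is_wderiv_def set_integrable_def by auto
  have f1m: "f1 \<in> borel_measurable lborel" and f1i: "integrable lborel (\<lambda>u. (f1 u)\<^sup>2)"
    using L_meas_int[OF c s] unfolding f1_def by auto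
  have g1m: "g1 \<in> borel_measurable lborel" unfolding g1_def by simp
  have i1m: "i1 \<in> borel_measurable lborel" unfolding i1_def by simp
  have g1sq: "(g1 u)\<^sup>2 = indicator {0..s} u * (indicator {0..t} u * (g u)\<^sup>2)" for u
    unfolding g1_def using s by (auto simp: indicator_def)
  have g1i: "integrable lborel (\<lambda>u. (g1 u)\<^sup>2)"
    unfolding g1sq using integrable_mult_indicator[OF _ gt, of "{0..s}"] by simp
  have i1i: "integrable lborel (\<lambda>u. (i1 u)\<^sup>2)"
  proof -
    have "integrable lborel (indicator {0..s} :: real \<Rightarrow> real)"
      using s by (simp add: integrable_indicator_iff emeasure_lborel_Icc_eq)
    moreover have "(i1 u)\<^sup>2 = indicator {0..s} u" for u unfolding i1_def by (simp add: indicator_def)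
    ultimately show ?thesis by simp
  qed
  define G where "G = (LINT u:{0..t}|lborel. (g u)\<^sup>2)"
  define Gs where "Gs = (LINT u|lborel. (g1 u)\<^sup>2)"
  define R where "R = (LINT u:{0..s}|lborel. (left_lim Z u)\<^sup>2)"
  have Gs0: "0 \<le> Gs" unfolding Gs_def by simp
  have GsG: "Gs \<le> G"
    unfolding Gs_def G_def set_lebesgue_integral_def
    by (rule integral_mono[OF g1i]) (use gt g1sq in \<open>auto simp: indicator_def\<close>)
  have R0: "0 \<le> R" unfolding R_def set_lebesgue_integral_def
    by (rule integral_nonneg_AE) auto
  have Rf: "R = (LINT u|lborel. (f1 u)\<^sup>2)"
    unfolding R_def f1_def set_lebesgue_integral_def
    by (rule Bochner_Integration.integral_cong) (auto simp: indicator_def)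
  have J: "(LINT u:{0..s}|lborel. left_lim Z u * g u) = (LINT u|lborel. f1 u * g1 u)"
    unfolding f1_def g1_def set_lebesgue_integral_def
    by (rule Bochner_Integration.integral_cong) (auto simp: indicator_def)
  have Jb: "\<bar>LINT u|lborel. f1 u * g1 u\<bar> \<le> sqrt R * sqrt Gs"
    using cs_lborel(2)[OF f1m g1m f1i g1i] unfolding Rf Gs_def .
  have i1sq: "(LINT u|lborel. (i1 u)\<^sup>2) = s"
  proof -
    have "(LINT u|lborel. (i1 u)\<^sup>2) = (LINT u|lborel. indicator {0..s} u)"
      unfolding i1_def by (rule Bochner_Integration.integral_cong) (auto simp: indicator_def)
    also have "\<dots> = s" using s by simp
    finally show ?thesis .
  qed
  have phis: "\<phi> s = \<phi> 0 + (LINT u|lborel. i1 u * g1 u)"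
  proof -
    have "(LINT u|lborel. i1 u * g1 u) = (LINT u|lborel. indicator {0..s} u * g u)"
      unfolding i1_def g1_def by (rule Bochner_Integration.integral_cong) (auto simp: indicator_def)
    then show ?thesis using wd_eq[OF g, of s] s by simp
  qed
  have Ib: "\<bar>LINT u|lborel. i1 u * g1 u\<bar> \<le> sqrt s * sqrt Gs"
    using cs_lborel(2)[OF i1m g1m i1i g1i] unfolding i1sq Gs_def .
  define a where "a = \<phi> 0"
  define N where "N = sqrt (a\<^sup>2 + G)"
  have G0: "0 \<le> G" using Gs0 GsG by linarith
  have sGs: "sqrt Gs \<le> N" unfolding N_def using GsG G0
    by (intro real_sqrt_le_mono) (smt (verit) zero_le_power2)
  have aN: "\<bar>a\<bar> \<le> N" unfolding N_def using G0
    by (metis abs_of_nonneg le_add_same_cancel1 real_sqrt_abs real_sqrt_le_mono)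
  have N0: "0 \<le> N" unfolding N_def using G0 by simp
  have N2: "N\<^sup>2 = a\<^sup>2 + G" unfolding N_def using G0 by simp
  have phib: "\<bar>\<phi> s\<bar> \<le> (1 + s) * N"
  proof -
    define y where "y = sqrt Gs"
    define z where "z = sqrt s"
    have y2: "y\<^sup>2 = Gs" unfolding y_def using Gs0 by simp
    have z2: "z\<^sup>2 = s" unfolding z_def using s by simp
    have y0: "0 \<le> y" and z0: "0 \<le> z" unfolding y_def z_def using Gs0 s by auto
    have "\<bar>\<phi> s\<bar> \<le> \<bar>a\<bar> + z * y" using phis Ib unfolding a_def y_def z_def by linarith
    moreover have "(\<bar>a\<bar> + z * y)\<^sup>2 \<le> ((1 + s) * N)\<^sup>2"
    proof -
      have "(\<bar>a\<bar> + z * y)\<^sup>2 \<le> (a\<^sup>2 + y\<^sup>2) * (1 + z\<^sup>2)"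
      proof -
        have "0 \<le> (\<bar>a\<bar> * z - y)\<^sup>2" by (rule zero_le_power2)
        moreover have "(a\<^sup>2 + y\<^sup>2) * (1 + z\<^sup>2) - (\<bar>a\<bar> + z * y)\<^sup>2 = (\<bar>a\<bar> * z - y)\<^sup>2"
          by (simp add: power2_eq_square algebra_simps)
        ultimately show ?thesis by linarith
      qed
      also have "\<dots> = (a\<^sup>2 + Gs) * (1 + s)" unfolding y2 z2 ..
      also have "\<dots> \<le> N\<^sup>2 * (1 + s)" unfolding N2 using GsG s
        by (intro mult_right_mono) linarith+
      also have "\<dots> \<le> N\<^sup>2 * (1 + s)\<^sup>2"
      proof (rule mult_left_mono)
        show "1 + s \<le> (1 + s)\<^sup>2" using s by (simp add: power2_eq_square)
      qed simp
      also have "\<dots> = ((1 + s) * N)\<^sup>2" by (simp add: power_mult_distrib mult.commute)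
      finally show ?thesis .
    qed
    then have "\<bar>a\<bar> + z * y \<le> (1 + s) * N"
    proof (rule power2_le_imp_le)
      show "0 \<le> (1 + s) * N" using N0 s by simp
    qed
    ultimately show ?thesis by linarith
  qed
  have "\<bar>\<phi> s * Z s - \<phi> 0 * Z 0 - (LINT u:{0..s}|lborel. left_lim Z u * g u)\<bar>
      \<le> \<bar>\<phi> s\<bar> * \<bar>Z s\<bar> + \<bar>a\<bar> * \<bar>Z 0\<bar> + sqrt R * sqrt Gs"
  proof -
    have "\<bar>\<phi> s * Z s - \<phi> 0 * Z 0 - (LINT u:{0..s}|lborel. left_lim Z u * g u)\<bar>
      \<le> \<bar>\<phi> s * Z s\<bar> + \<bar>\<phi> 0 * Z 0\<bar> + \<bar>LINT u|lborel. f1 u * g1 u\<bar>"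
      unfolding J by linarith
    then show ?thesis using Jb unfolding a_def abs_mult by linarith
  qed
  also have "\<dots> \<le> ((1 + s) * N) * \<bar>Z s\<bar> + N * \<bar>Z 0\<bar> + sqrt R * N"
  proof (intro add_mono)
    show "\<bar>\<phi> s\<bar> * \<bar>Z s\<bar> \<le> (1 + s) * N * \<bar>Z s\<bar>" using phib by (rule mult_right_mono) simp
    show "\<bar>a\<bar> * \<bar>Z 0\<bar> \<le> N * \<bar>Z 0\<bar>" using aN by (rule mult_right_mono) simp
    show "sqrt R * sqrt Gs \<le> sqrt R * N" using sGs by (rule mult_left_mono) (simp add: R0)
  qed
  also have "\<dots> = (\<bar>Z s\<bar> * (1 + s) + \<bar>Z 0\<bar> + sqrt R) * N" by (simp add: algebra_simps)
  finally show ?thesis unfolding N_def a_def G_def R_def .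
qed



lemma norm_eq:
  assumes g: "is_wderiv t \<phi> g"
  shows "w12_norm t \<phi> = sqrt ((\<phi> 0)\<^sup>2 + (LINT u:{0..t}|lborel. (g u)\<^sup>2))"
proof -
  have ph: "\<phi> \<in> W12 t" using g unfolding W12_def by blast
  have w: "is_wderiv t \<phi> (wderiv t \<phi>)" by (rule wderiv_is[OF ph])
  have "AE u in lborel. indicator {0..t} u * (wderiv t \<phi> u - g u) = 0"
    by (rule wd_unique[OF w g])
  then have ae: "AE u in lborel. indicator {0..t} u * (wderiv t \<phi> u)\<^sup>2 = indicator {0..t} u * (g u)\<^sup>2"
  proof (rule AE_mp)
    show "AE u in lborel. indicator {0..t} u * (wderiv t \<phi> u - g u) = (0::real) \<longrightarrow> indicator {0..t} u * (wderiv t \<phi> u)\<^sup>2 = indicator {0..t} u * (g u)\<^sup>2"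
    proof (rule AE_I2, rule impI)
    fix u assume "indicator {0..t} u * (wderiv t \<phi> u - g u) = (0::real)"
    then show "indicator {0..t} u * (wderiv t \<phi> u)\<^sup>2 = indicator {0..t} u * (g u)\<^sup>2"
      by (cases "u \<in> {0..t}") simp_all
  qed
  qed
  have "wderiv t \<phi> \<in> borel_measurable lborel" "g \<in> borel_measurable lborel"
    using w g unfolding is_wderiv_def by blast+
  then have [measurable]: "wderiv t \<phi> \<in> borel_measurable borel" "g \<in> borel_measurable borel"
    by simp_all
  have m1: "(\<lambda>x. indicator {0..t} x * (wderiv t \<phi> x)\<^sup>2) \<in> borel_measurable lborel" by simp
  have m2: "(\<lambda>x. indicator {0..t} x * (g x)\<^sup>2) \<in> borel_measurable lborel" by simp
  have "(LINT u:{0..t}|lborel. (wderiv t \<phi> u)\<^sup>2) = (LINT u:{0..t}|lborel. (g u)\<^sup>2)"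
    unfolding set_lebesgue_integral_def real_scaleR_def
    by (rule integral_cong_AE[OF m1 m2 ae])
  then show ?thesis unfolding w12_norm_def by simp
qed

lemma Lg_int:
  assumes c: "cadlag_on t Z" and s: "0 \<le> s" "s \<le> t" and g: "is_wderiv t \<phi> g"
  shows "set_integrable lborel {0..s} (\<lambda>u. left_lim Z u * g u)"
proof -
  define f1 where "f1 u = indicator {0..s} u * left_lim Z u" for u
  define g1 where "g1 u = indicator {0..s} u * g u" for u
  have gm: "g \<in> borel_measurable lborel" and gt: "integrable lborel (\<lambda>u. indicator {0..t} u * (g u)\<^sup>2)"
    using g unfolding is_wderiv_def set_integrable_def by (simp_all only: real_scaleR_def)
  then have [measurable]: "g \<in> borel_measurable borel" by simp
  have f1m: "f1 \<in> borel_measurable lborel" and f1i: "integrable lborel (\<lambda>u. (f1 u)\<^sup>2)"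
    using L_meas_int[OF c s] unfolding f1_def by auto
  have g1m: "g1 \<in> borel_measurable lborel" unfolding g1_def by simp
  have g1sq: "(g1 u)\<^sup>2 = indicator {0..s} u * (indicator {0..t} u * (g u)\<^sup>2)" for u
    unfolding g1_def using s by (auto simp: indicator_def)
  have g1i: "integrable lborel (\<lambda>u. (g1 u)\<^sup>2)"
    unfolding g1sq using integrable_mult_indicator[OF _ gt, of "{0..s}"] by simp
  have "integrable lborel (\<lambda>u. f1 u * g1 u)" by (rule cs_lborel(1)[OF f1m g1m f1i g1i])
  moreover have "f1 u * g1 u = indicator {0..s} u * (left_lim Z u * g u)" for u
    unfolding f1_def g1_def by (auto simp: indicator_def)
  ultimately show ?thesis unfolding set_integrable_def by simp
qed



theorem lemmaA1:
  fixes Z :: "real \<Rightarrow> real" and s t :: real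
  assumes "t > 0" and "0 \<le> s" and "s \<le> t" and "cadlag_on t Z"
  shows "(\<forall>h\<in>W12 t. \<forall>e>0. \<exists>d>0. \<forall>k\<in>W12 t.
            w12_norm t (\<lambda>u. k u - h u) < d \<longrightarrow> \<bar>Xint t Z s k - Xint t Z s h\<bar> < e)
    \<and> set_integrable lborel {0..s} (\<lambda>u. (left_lim Z u)\<^sup>2)
    \<and> dual_norm t (Xint t Z s) \<le>
        \<bar>Z s\<bar> * (1 + s) + \<bar>Z 0\<bar> + sqrt (LINT u:{0..s}|lborel. (left_lim Z u)\<^sup>2)"
proof -
  note c = assms(4) and s = assms(2,3)
  define C where "C = \<bar>Z s\<bar> * (1 + s) + \<bar>Z 0\<bar> + sqrt (LINT u:{0..s}|lborel. (left_lim Z u)\<^sup>2)"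
  have C0: "0 \<le> C"
  proof -
    have "0 \<le> (LINT u:{0..s}|lborel. (left_lim Z u)\<^sup>2)"
      unfolding set_lebesgue_integral_def by (rule integral_nonneg_AE) auto
    then show ?thesis unfolding C_def using s by simp
  qed
  have Lsq: "set_integrable lborel {0..s} (\<lambda>u. (left_lim Z u)\<^sup>2)"
  proof -
    have "integrable lborel (\<lambda>u. (indicator {0..s} u * left_lim Z u)\<^sup>2)"
      by (rule L_meas_int(2)[OF c s])
    moreover have "(indicator {0..s} u * left_lim Z u)\<^sup>2 = indicator {0..s} u * (left_lim Z u)\<^sup>2" for u :: real
      by (simp add: indicator_def)
    ultimately show ?thesis unfolding set_integrable_def by simp
  qed
  have Xb: "\<bar>Xint t Z s \<phi>\<bar> \<le> C * w12_norm t \<phi>" if ph: "\<phi> \<in> W12 t" for \<phi>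
  proof -
    have w: "is_wderiv t \<phi> (wderiv t \<phi>)" by (rule wderiv_is[OF ph])
    show ?thesis
      using core[OF c s w] unfolding Xint_def norm_eq[OF w] C_def .
  qed
  have cont: "\<forall>h\<in>W12 t. \<forall>e>0. \<exists>d>0. \<forall>k\<in>W12 t.
            w12_norm t (\<lambda>u. k u - h u) < d \<longrightarrow> \<bar>Xint t Z s k - Xint t Z s h\<bar> < e"
  proof (intro ballI allI impI)
    fix h e assume h: "h \<in> W12 t" and e: "(e::real) > 0"
    show "\<exists>d>0. \<forall>k\<in>W12 t. w12_norm t (\<lambda>u. k u - h u) < d \<longrightarrow> \<bar>Xint t Z s k - Xint t Z s h\<bar> < e"
    proof (intro exI[of _ "e / (C + 1)"] conjI ballI impI)
      show "0 < e / (C + 1)" using e C0 by simp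
      fix k assume k: "k \<in> W12 t" and kd: "w12_norm t (\<lambda>u. k u - h u) < e / (C + 1)"
      have wk: "is_wderiv t k (wderiv t k)" by (rule wderiv_is[OF k])
      have wh: "is_wderiv t h (wderiv t h)" by (rule wderiv_is[OF h])
      have wd: "is_wderiv t (\<lambda>u. k u - h u) (\<lambda>u. wderiv t k u - wderiv t h u)"
        by (rule wd_diff[OF wk wh])
      have ik: "set_integrable lborel {0..s} (\<lambda>u. left_lim Z u * wderiv t k u)"
        by (rule Lg_int[OF c s wk])
      have ih: "set_integrable lborel {0..s} (\<lambda>u. left_lim Z u * wderiv t h u)"
        by (rule Lg_int[OF c s wh])
      have "(LINT u:{0..s}|lborel. left_lim Z u * (wderiv t k u - wderiv t h u))
          = (LINT u:{0..s}|lborel. left_lim Z u * wderiv t k u) - (LINT u:{0..s}|lborel. left_lim Z u * wderiv t h u)"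
        using set_integral_diff(2)[OF ik ih] by (simp add: algebra_simps)
      then have "Xint t Z s k - Xint t Z s h
          = (k s - h s) * Z s - (k 0 - h 0) * Z 0 - (LINT u:{0..s}|lborel. left_lim Z u * (wderiv t k u - wderiv t h u))"
        unfolding Xint_def by (simp add: algebra_simps)
      also have "\<bar>\<dots>\<bar> \<le> C * w12_norm t (\<lambda>u. k u - h u)"
        using core[OF c s wd] unfolding norm_eq[OF wd] C_def by simp
      also have "\<dots> \<le> C * (e / (C + 1))"
        using kd C0 by (intro mult_left_mono) auto
      also have "\<dots> < e"
        using C0 e by (simp add: field_simps)
      finally show "\<bar>Xint t Z s k - Xint t Z s h\<bar> < e" .
    qed
  qed
  have dn: "dual_norm t (Xint t Z s) \<le> C"
    unfolding dual_norm_def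
  proof (rule cSup_least)
    have z: "(\<lambda>_. 0) \<in> W12 t" using wd_zero unfolding W12_def by blast
    have "w12_norm t (\<lambda>_. 0) = 0" unfolding norm_eq[OF wd_zero] by simp
    then show "{\<bar>Xint t Z s h\<bar> |h. h \<in> W12 t \<and> w12_norm t h \<le> 1} \<noteq> {}"
      using z by force
  next
    fix x assume "x \<in> {\<bar>Xint t Z s h\<bar> |h. h \<in> W12 t \<and> w12_norm t h \<le> 1}"
    then obtain h where h: "h \<in> W12 t" "w12_norm t h \<le> 1" and x: "x = \<bar>Xint t Z s h\<bar>" by blast
    have "x \<le> C * w12_norm t h" using Xb[OF h(1)] x by simp
    also have "\<dots> \<le> C * 1" using h(2) C0 by (intro mult_left_mono) auto
    finally show "x \<le> C" by simp
  qed
  show ?thesis using cont Lsq dn unfolding C_def by blast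
qed

end
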